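(* Let $\beta\in[2/3,1]$. If $f(z)=z+\sum_{n\ge2}a_nz^n$ is analytic on $\mathbb{U}$ and $1+\frac{zf''(z)}{f'(z)}\prec\big(\frac{1+z}{1-z}\big)^\beta$ (i.e. $f$ is strongly convex of order $\beta$), then $$|a_3^2-a_4^2|\le\beta^4+\frac{\beta^2(1+17\beta^2)^2}{324}.$$
   Context: $\mathbb{U}$ is the open unit disk; $\big(\frac{1+z}{1-z}\big)^\beta$ denotes the principal branch. For analytic $f,F$ on $\mathbb{U}$, $f\prec F$ means $f=F\circ\omega$ for some analytic $\omega:\mathbb{U}\to\mathbb{U}$ with $\omega(0)=0$. *)

theory Defs
  imports "HOL-Complex_Analysis.Complex_Analysis"
begin

definition subordinate :: "(complex \<Rightarrow> complex) \<Rightarrow> (complex \<Rightarrow> complex) \<Rightarrow> bool" where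
  "subordinate g F \<longleftrightarrow> g holomorphic_on ball 0 1 \<and> F holomorphic_on ball 0 1 \<and>
     (\<exists>w. w holomorphic_on ball 0 1 \<and> w ` ball 0 1 \<subseteq> ball 0 1 \<and> w 0 = 0 \<and>
          (\<forall>z\<in>ball 0 1. g z = F (w z)))"

definition taylor_coeff :: "(complex \<Rightarrow> complex) \<Rightarrow> nat \<Rightarrow> complex" where
  "taylor_coeff f n = (deriv ^^ n) f 0 / of_nat (fact n)"

end

theory Submission
  imports Defs
begin

lemma core_real:
  fixes p q s \<nu> \<mu> :: real
  assumes pq: "p^2 + q^2 \<le> 1" and s: "0 \<le> s" "s \<le> 1"
    and h1: "\<nu> - 1 - \<mu>^2/8 \<ge> 0" and h2: "3*\<nu>^2 \<ge> 4*\<nu>" and h3: "3*\<nu>^2 \<ge> (1+\<mu>)^2"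
    and mu: "\<mu> \<ge> 0" and nu: "\<nu> \<ge> 0"
  shows "(1-s)*((\<nu> - s*(\<nu> - \<mu>*p + p^2 - q^2))^2 + (s*(2*p*q - \<mu>*q))^2)
          \<le> (\<nu> - s*(1 - (p^2+q^2)))^2"
proof -
  define m where "m = 1 - (p^2+q^2)"
  define Rq where "Rq = \<nu> - \<mu>*p + p^2 - q^2"
  define Iq where "Iq = 2*p*q - \<mu>*q"
  define c1 where "c1 = \<nu>^2 + 2*\<nu>*(Rq - m)"
  define Fq where "Fq = 2*\<nu>^2 + 2*\<nu>*Rq - 4*\<nu>*m + m^2 - Rq^2 - Iq^2"
  have "Rq - m = \<nu> - 1 - \<mu>^2/8 + 2*(p - \<mu>/4)^2"
    unfolding Rq_def m_def by (simp add: power2_eq_square algebra_simps)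
  moreover have "2*(p - \<mu>/4)^2 \<ge> 0" by simp
  ultimately have "Rq - m \<ge> 0" using h1 by linarith
  hence c1: "c1 \<ge> 0" unfolding c1_def using nu by simp
  have "p^2 \<le> 1" using pq zero_le_power2[of q] by linarith
  hence p1: "\<bar>p\<bar> \<le> 1" by (simp add: abs_square_le_1)
  have Feq: "Fq = 3*\<nu>^2 - 4*\<nu>*m + m^2 - (p^2+q^2)*((p^2+q^2) - 2*\<mu>*p + \<mu>^2)"
    unfolding Fq_def Rq_def Iq_def m_def by algebra
  have "(p^2+q^2) - 2*\<mu>*p + \<mu>^2 \<le> (1+\<mu>)^2"
  proof -
    have "\<mu> * (-p) \<le> \<mu> * 1" using p1 mu by (intro mult_left_mono) auto
    thus ?thesis using pq by (simp add: power2_eq_square algebra_simps)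
  qed
  hence "(p^2+q^2)*((p^2+q^2) - 2*\<mu>*p + \<mu>^2) \<le> (p^2+q^2)*(1+\<mu>)^2"
    by (simp add: mult_left_mono)
  hence Fge: "Fq \<ge> 3*\<nu>^2 - 4*\<nu>*m - (p^2+q^2)*(1+\<mu>)^2"
    unfolding Feq using zero_le_power2[of m] by linarith
  have Feq2: "3*\<nu>^2 - 4*\<nu>*m - (p^2+q^2)*(1+\<mu>)^2
       = m*(3*\<nu>^2 - 4*\<nu>) + (p^2+q^2)*(3*\<nu>^2 - (1+\<mu>)^2)"
    unfolding m_def by algebra
  have "m \<ge> 0" using pq m_def by simp
  hence "m*(3*\<nu>^2 - 4*\<nu>) \<ge> 0" "(p^2+q^2)*(3*\<nu>^2 - (1+\<mu>)^2) \<ge> 0"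
    using h2 h3 by (auto intro!: mult_nonneg_nonneg)
  hence Fq: "Fq \<ge> 0" using Fge Feq2 by linarith
  have eq: "(\<nu> - s*m)^2 - (1-s)*((\<nu> - s*Rq)^2 + (s*Iq)^2)
     = s*((1-s)*(c1*(1-s) + Fq * s) + s^2*(\<nu>-m)^2)"
    unfolding c1_def Fq_def by algebra
  have "s*((1-s)*(c1*(1-s) + Fq * s) + s^2*(\<nu>-m)^2) \<ge> 0"
    using s c1 Fq by (intro mult_nonneg_nonneg add_nonneg_nonneg) auto
  with eq show ?thesis unfolding Rq_def Iq_def m_def by linarith
qed

lemma key_ineq:
  fixes a w2 w3 :: complex and \<beta> :: real
  assumes b1: "2/3 \<le> \<beta>" and b2: "\<beta> \<le> 1" and a1: "cmod a < 1"
    and T: "cmod (of_real (1 - (cmod a)^2) * w3 + cnj a * w2^2) \<le> (1 - (cmod a)^2)^2 - (cmod w2)^2"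
  shows "cmod (w3 + of_real (5*\<beta>) * a * w2 + of_real ((1+17*\<beta>^2)/3) * a^3) \<le> (1+17*\<beta>^2)/3"
proof -
  define \<nu> where "\<nu> = (1+17*\<beta>^2)/3"
  define \<mu> where "\<mu> = 5*\<beta>"
  define s where "s = 1 - (cmod a)^2"
  define x where "x = cmod a"
  have x0: "x \<ge> 0" "x < 1" using a1 x_def by auto
  have xs: "x^2 = 1 - s" unfolding s_def x_def by simp
  have "x^2 < 1" using x0 by (simp add: abs_square_less_1)
  hence s0: "s > 0" "s \<le> 1" using xs zero_le_power2[of x] by linarith+
  have bsq: "\<beta>^2 \<ge> 4/9" using power_mono[OF b1, of 2] by (simp add: power2_eq_square)
  have nu1: "\<nu> \<ge> 77/27" unfolding \<nu>_def using bsq by simp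
  have h1: "\<nu> - 1 - \<mu>^2/8 \<ge> 0"
    proof -
    have "\<nu> - 1 - \<mu>^2/8 = (61*\<beta>^2 - 16)/24"
      unfolding \<nu>_def \<mu>_def by (simp add: power_mult_distrib field_simps)
    thus ?thesis using bsq by simp
  qed
  have h2: "3*\<nu>^2 \<ge> 4*\<nu>" using nu1 by (simp add: power2_eq_square)
  have h3: "3*\<nu>^2 \<ge> (1+\<mu>)^2"
  proof -
    have "\<beta>*(17*\<beta> - 9) \<ge> (2/3)*(7/3)"
      using b1 by (intro mult_mono) auto
    hence "\<nu> \<ge> 3/5*(1+\<mu>)" unfolding \<nu>_def \<mu>_def by (simp add: power2_eq_square algebra_simps)
    moreover have "3/5*(1+\<mu>) \<ge> 0" unfolding \<mu>_def using b1 by simp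
    ultimately have "(3/5*(1+\<mu>))^2 \<le> \<nu>^2" by (intro power_mono) auto
    moreover have "(3/5*(1+\<mu>))^2 = 9/25*(1+\<mu>)^2" by (simp add: power2_eq_square algebra_simps)
    ultimately show ?thesis using zero_le_power2[of "1+\<mu>"] by linarith
  qed
  have mu0: "\<mu> \<ge> 0" "\<nu> \<ge> 0" using b1 nu1 unfolding \<mu>_def by auto
  define T where "T = of_real s * w3 + cnj a * w2^2"
  define E where "E = w3 + of_real \<mu> * a * w2 + of_real \<nu> * a^3"
  have T': "cmod T \<le> s^2 - (cmod w2)^2" using T unfolding T_def s_def .
  have "(cmod w2)^2 \<le> s^2" using T' norm_ge_zero[of T] by linarith
  hence w2s: "cmod w2 \<le> s" by (rule power2_le_imp_le) (use s0 in auto)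
  have "s * cmod E \<le> s * \<nu>"
  proof (cases "a = 0")
    case True
    hence "s = 1" unfolding s_def by simp
    hence "cmod E \<le> 1 - (cmod w2)^2" using T' True unfolding E_def T_def by simp
    hence "cmod E \<le> 1" using zero_le_power2[of "cmod w2"] by linarith
    thus ?thesis using \<open>s = 1\<close> nu1 by simp
  next
    case False
    hence xpos: "x > 0" unfolding x_def by simp
    define e where "e = a / of_real x"
    have ae: "a = of_real x * e" unfolding e_def using xpos by simp
    have e1: "cmod e = 1" unfolding e_def x_def using False by (simp add: norm_divide)
    hence enz: "e \<noteq> 0" by auto
    have cnje: "cnj a * e = of_real x"
    proof -
      have "e * cnj e = 1" using complex_norm_square[of e] e1 by simp
      thus ?thesis unfolding ae by (simp add: mult.commute)
    qed
    define t where "t = w2 / (of_real s * e^2)"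
    have w2t: "w2 = of_real s * t * e^2" unfolding t_def using s0 enz by simp
    have tn: "cmod w2 = s * cmod t" unfolding w2t using s0 e1 by (simp add: norm_mult norm_power)
    hence t1: "cmod t \<le> 1" using w2s s0 by simp
    define p where "p = Re t"
    define q where "q = Im t"
    have pq: "(cmod t)^2 = p^2 + q^2" unfolding p_def q_def by (simp add: cmod_power2)
    define \<zeta> where "\<zeta> = of_real \<nu> - of_real \<mu> * t + t^2"
    have Rez: "Re \<zeta> = \<nu> - \<mu>*p + p^2 - q^2" unfolding \<zeta>_def p_def q_def by (simp add: power2_eq_square)
    have Imz: "Im \<zeta> = 2*p*q - \<mu>*q" unfolding \<zeta>_def p_def q_def by (simp add: power2_eq_square)
    have nz: "(cmod (of_real \<nu> - of_real s * \<zeta>))^2 = (\<nu> - s*(\<nu> - \<mu>*p + p^2 - q^2))^2 + (s*(2*p*q - \<mu>*q))^2"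
      unfolding cmod_power2 by (simp add: Rez Imz)
    have "p^2 + q^2 \<le> 1" using t1 pq power_le_one[of "cmod t" 2] by simp
    from core_real[OF this _ _ h1 h2 h3 mu0] s0
    have "(1-s) * (cmod (of_real \<nu> - of_real s * \<zeta>))^2 \<le> (\<nu> - s*(1 - (cmod t)^2))^2"
      unfolding nz pq by simp
    hence "(x * cmod (of_real \<nu> - of_real s * \<zeta>))^2 \<le> (\<nu> - s*(1 - (cmod t)^2))^2"
      by (simp add: power_mult_distrib xs)
    moreover have "\<nu> - s*(1 - (cmod t)^2) \<ge> 0"
    proof -
      have "(cmod t)^2 \<le> 1" using t1 power_le_one[of "cmod t" 2] by simp
      hence "s*(1 - (cmod t)^2) \<le> 1*1" using s0 by (intro mult_mono) auto
      thus ?thesis using nu1 by linarith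
    qed
    ultimately have key: "x * cmod (of_real \<nu> - of_real s * \<zeta>) \<le> \<nu> - s*(1 - (cmod t)^2)"
      by (rule power2_le_imp_le)
    have ident: "of_real s * E = T + of_real s * of_real x * e^3 * (of_real \<nu> - of_real s * \<zeta>)"
    proof -
      have xs': "(of_real x :: complex)^2 = 1 - of_real s" using xs by (metis of_real_1 of_real_diff of_real_power)
      show ?thesis unfolding E_def T_def \<zeta>_def using ae w2t cnje xs' by algebra
    qed
    have "s * cmod E = cmod (of_real s * E)" using s0 by (simp add: norm_mult)
    also have "\<dots> \<le> cmod T + s * x * cmod (of_real \<nu> - of_real s * \<zeta>)"
    proof -
      have "cmod (of_real s * of_real x * e^3 * (of_real \<nu> - of_real s * \<zeta>)) = s * x * cmod (of_real \<nu> - of_real s * \<zeta>)"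
        using s0 xpos e1 by (simp add: norm_mult norm_power)
      thus ?thesis unfolding ident using norm_triangle_ineq by metis
    qed
    also have "\<dots> \<le> (s^2 - (s * cmod t)^2) + s * (\<nu> - s*(1 - (cmod t)^2))"
    proof (rule add_mono)
      show "cmod T \<le> s^2 - (s * cmod t)^2" using T' tn by simp
      show "s * x * cmod (of_real \<nu> - of_real s * \<zeta>) \<le> s * (\<nu> - s*(1 - (cmod t)^2))"
        using mult_left_mono[OF key, of s] s0 by (simp add: mult.assoc)
    qed
    also have "\<dots> = s * \<nu>" by (simp add: power2_eq_square algebra_simps)
    finally show ?thesis .
  qed
  hence "cmod E \<le> \<nu>" using s0 by simp
  thus ?thesis unfolding E_def \<nu>_def \<mu>_def .
qed

lemma fps_mult_nth_1: "fps_nth (f * g) 1 = fps_nth f 0 * fps_nth g 1 + fps_nth f 1 * fps_nth g 0"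
  by (simp add: fps_mult_nth)
lemma fps_mult_nth_2: "fps_nth (f * g) 2 = fps_nth f 0 * fps_nth g 2 + fps_nth f 1 * fps_nth g 1 + fps_nth f 2 * fps_nth g 0"
  by (simp add: fps_mult_nth numeral_2_eq_2)
lemma fps_mult_nth_3: "fps_nth (f * g) 3 = fps_nth f 0 * fps_nth g 3 + fps_nth f 1 * fps_nth g 2 + fps_nth f 2 * fps_nth g 1 + fps_nth f 3 * fps_nth g 0"
  by (simp add: fps_mult_nth eval_nat_numeral)

lemma hol_fps:
  assumes "f holomorphic_on ball 0 1"
  shows "f has_fps_expansion fps_expansion f 0"
  using assms by (intro has_fps_expansion_fps_expansion) auto

lemma eq_fps:
  fixes f g :: "complex \<Rightarrow> complex"
  assumes "f has_fps_expansion F" "g has_fps_expansion G" "\<forall>z\<in>ball 0 1. f z = g z"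
  shows "F = G"
proof -
  have "eventually (\<lambda>z. z \<in> ball (0::complex) 1) (nhds 0)"
    by (intro eventually_nhds_in_open) auto
  hence ev: "eventually (\<lambda>z. f z = g z) (nhds 0)"
    by eventually_elim (use assms(3) in auto)
  have "g has_fps_expansion F"
    using has_fps_expansion_cong[OF ev refl, of F] assms(1) by simp
  thus ?thesis using assms(2) by (rule fps_expansion_unique_complex)
qed

lemma schwarz_div:
  assumes holw: "w holomorphic_on ball 0 1" and w0: "w 0 = 0"
    and wl: "\<forall>z\<in>ball 0 1. cmod (w z) < 1"
  obtains \<phi> where "\<phi> holomorphic_on ball 0 1" "\<forall>z\<in>ball 0 1. w z = z * \<phi> z"
    "\<forall>z\<in>ball 0 1. cmod (\<phi> z) \<le> 1"
proof -
  obtain h where holh: "h holomorphic_on ball 0 1"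
    and eq: "\<And>z. norm z < 1 \<Longrightarrow> w z = z * h z" and d0: "deriv w 0 = h 0"
    using Schwarz3[OF holw w0] by blast
  have no: "\<And>z. norm z < 1 \<Longrightarrow> norm (w z) < 1" using wl by auto
  have "cmod (h z) \<le> 1" if "z \<in> ball 0 1" for z
  proof (cases "z = 0")
    case True
    thus ?thesis using Schwarz_Lemma(2)[OF holw w0 no, of 0] d0 by simp
  next
    case False
    have "norm (w z) \<le> norm z" using Schwarz_Lemma(1)[OF holw w0 no, of z] that by simp
    hence "norm z * norm (h z) \<le> norm z * 1" using eq[of z] that by (simp add: norm_mult)
    thus ?thesis using False by simp
  qed
  thus ?thesis using that[of h] holh eq by auto
qed

lemma max_mod_dich:
  assumes holh: "h holomorphic_on ball 0 1" and hl: "\<forall>z\<in>ball 0 1. cmod (h z) \<le> 1"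
  shows "(\<forall>z\<in>ball 0 1. cmod (h z) < 1) \<or> (\<exists>c. cmod c = 1 \<and> (\<forall>z\<in>ball 0 1. h z = c))"
proof (cases "\<forall>z\<in>ball 0 1. cmod (h z) < 1")
  case True thus ?thesis by blast
next
  case False
  hence "\<not> (\<forall>z\<in>ball 0 1. cmod (h z) < 1)" .
  then obtain z0 where z0: "z0 \<in> ball 0 1" "cmod (h z0) = 1" using hl by force
  have "h constant_on ball 0 1"
  proof (rule Schwarz2[OF holh, of "1 - cmod z0" z0])
    show "0 < 1 - cmod z0" using z0 by simp
    show "ball z0 (1 - cmod z0) \<subseteq> ball 0 1" using z0 by (simp add: ball_subset_ball_iff)
    fix z assume "cmod (z0 - z) < 1 - cmod z0"
    hence "z \<in> ball 0 1" using norm_triangle_ineq2[of z z0] by (simp add: norm_minus_commute)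
    thus "cmod (h z) \<le> cmod (h z0)" using hl z0 by auto
  qed
  then obtain c where c: "\<forall>z\<in>ball 0 1. h z = c" unfolding constant_on_def by blast
  hence "cmod c = 1" using z0 by auto
  thus ?thesis using c by blast
qed

lemma cnj_mult_self: "cnj a * a = of_real (1 - (1 - (cmod a)^2))"
  using complex_norm_square[of a] by (simp add: mult.commute)

lemma schwarz_pick0:
  assumes holh: "h holomorphic_on ball 0 1" and hl: "\<forall>z\<in>ball 0 1. cmod (h z) \<le> 1"
  shows "cmod (fps_nth (fps_expansion h 0) 1) \<le> 1 - (cmod (h 0))^2"
proof -
  define H where "H = fps_expansion h 0"
  have hH: "h has_fps_expansion H" unfolding H_def by (rule hol_fps[OF holh])
  from max_mod_dich[OF holh hl] show ?thesis
  proof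
    assume "\<exists>c. cmod c = 1 \<and> (\<forall>z\<in>ball 0 1. h z = c)"
    then obtain c where c: "cmod c = 1" "\<forall>z\<in>ball 0 1. h z = c" by blast
    have "H = fps_const c"
      using eq_fps[OF hH has_fps_expansion_const[of c]] c(2) by simp
    thus ?thesis using c unfolding H_def[symmetric] by simp
  next
    assume hl1: "\<forall>z\<in>ball 0 1. cmod (h z) < 1"
    define a where "a = h 0"
    have a1: "cmod a < 1" using hl1 a_def by simp
    define k where "k = (\<lambda>z. Moebius_function 0 a (h z))"
    have holk: "k holomorphic_on ball 0 1"
    proof -
      have "(Moebius_function 0 a \<circ> h) holomorphic_on ball 0 1"
        by (rule holomorphic_on_compose_gen[OF holh Moebius_function_holomorphic[OF a1]]) (use hl1 in auto)
      thus ?thesis unfolding k_def o_def .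
    qed
    have k0: "k 0 = 0" unfolding k_def a_def by (simp add: Moebius_function_eq_zero)
    have kl: "\<And>z. norm z < 1 \<Longrightarrow> norm (k z) < 1"
      unfolding k_def using hl1 a1 Moebius_function_norm_lt_1 by simp
    have dk: "norm (deriv k 0) \<le> 1" using Schwarz_Lemma(2)[OF holk k0 kl, of 0] by simp
    define K where "K = fps_expansion k 0"
    have kK: "k has_fps_expansion K" unfolding K_def by (rule hol_fps[OF holk])
    have K1: "fps_nth K 1 = deriv k 0" using fps_nth_fps_expansion[OF kK, of 1] by simp
    have K0: "fps_nth K 0 = 0" using has_fps_expansion_imp_0_eq_fps_nth_0[OF kK] k0 by simp
    have H0: "fps_nth H 0 = a" using has_fps_expansion_imp_0_eq_fps_nth_0[OF hH] a_def by simp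
    have den: "1 - cnj a * h z \<noteq> 0" if "z \<in> ball 0 1" for z
    proof
      assume "1 - cnj a * h z = 0"
      hence "cmod (cnj a * h z) = 1" by (metis norm_one right_minus_eq)
      moreover have "cmod (cnj a * h z) < 1"
      proof -
        have "cmod a * cmod (h z) < 1 * 1"
          using a1 hl1 that by (intro mult_strict_mono') auto
        thus ?thesis by (simp add: norm_mult)
      qed
      ultimately show False by simp
    qed
    have "(\<lambda>z. k z * (1 - cnj a * h z)) has_fps_expansion K * (1 - fps_const (cnj a) * H)"
      by (rule has_fps_expansion_mult[OF kK has_fps_expansion_diff[OF has_fps_expansion_1
                has_fps_expansion_cmult_left[OF hH]]])
    moreover have "(\<lambda>z. h z - a) has_fps_expansion H - fps_const a"
      by (rule has_fps_expansion_diff[OF hH has_fps_expansion_const])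
    moreover have "\<forall>z\<in>ball 0 1. k z * (1 - cnj a * h z) = h z - a"
      using den unfolding k_def Moebius_function_def by simp
    ultimately have eqK: "K * (1 - fps_const (cnj a) * H) = H - fps_const a"
      by (rule eq_fps)
    have "fps_nth (K * (1 - fps_const (cnj a) * H)) 1 = fps_nth (H - fps_const a) 1" by (simp only: eqK)
    hence "fps_nth K 1 * (1 - cnj a * a) = fps_nth H 1"
      by (simp add: fps_mult_nth_1 K0 H0)
    hence "fps_nth H 1 = fps_nth K 1 * of_real (1 - (cmod a)^2)" using cnj_mult_self[of a] by simp
    hence "cmod (fps_nth H 1) = cmod (fps_nth K 1) * cmod (complex_of_real (1 - (cmod a)^2))"
      by (simp only: norm_mult)
    moreover have "cmod (complex_of_real (1 - (cmod a)^2)) = 1 - (cmod a)^2"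
    proof -
      have "(cmod a)^2 \<le> 1" using a1 by (simp add: abs_square_le_1 less_imp_le)
      thus ?thesis by (simp only: norm_of_real abs_of_nonneg diff_ge_0_iff_ge)
    qed
    ultimately have "cmod (fps_nth H 1) = cmod (fps_nth K 1) * (1 - (cmod a)^2)" by simp
    also have "\<dots> \<le> 1 * (1 - (cmod a)^2)"
      using dk K1 a1 by (intro mult_right_mono) (auto simp: abs_square_less_1 less_imp_le)
    finally show ?thesis unfolding H_def a_def by simp
  qed
qed

lemma schur3:
  assumes holw: "w holomorphic_on ball 0 1" and w0: "w 0 = 0"
    and wl: "\<forall>z\<in>ball 0 1. cmod (w z) < 1"
  defines "W \<equiv> fps_expansion w 0"
  shows "(cmod (fps_nth W 1) = 1 \<and> fps_nth W 2 = 0 \<and> fps_nth W 3 = 0) \<or>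
         (cmod (fps_nth W 1) < 1 \<and>
          cmod (of_real (1 - (cmod (fps_nth W 1))^2) * fps_nth W 3 + cnj (fps_nth W 1) * (fps_nth W 2)^2)
            \<le> (1 - (cmod (fps_nth W 1))^2)^2 - (cmod (fps_nth W 2))^2)"
proof -
  have wW: "w has_fps_expansion W" unfolding W_def by (rule hol_fps[OF holw])
  obtain \<phi> where hol\<phi>: "\<phi> holomorphic_on ball 0 1" and w\<phi>: "\<forall>z\<in>ball 0 1. w z = z * \<phi> z"
    and \<phi>1: "\<forall>z\<in>ball 0 1. cmod (\<phi> z) \<le> 1"
    using schwarz_div[OF holw w0 wl] by blast
  define \<Phi> where "\<Phi> = fps_expansion \<phi> 0"
  have p\<Phi>: "\<phi> has_fps_expansion \<Phi>" unfolding \<Phi>_def by (rule hol_fps[OF hol\<phi>])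
  have "W = fps_X * \<Phi>"
    using eq_fps[OF wW has_fps_expansion_mult[OF has_fps_expansion_fps_X p\<Phi>]] w\<phi> by simp
  hence W1: "fps_nth W 1 = fps_nth \<Phi> 0" and W2: "fps_nth W 2 = fps_nth \<Phi> 1"
    and W3: "fps_nth W 3 = fps_nth \<Phi> 2"
    by (simp_all add: fps_X_mult_nth)
  from max_mod_dich[OF hol\<phi> \<phi>1] show ?thesis
  proof
    assume "\<exists>c. cmod c = 1 \<and> (\<forall>z\<in>ball 0 1. \<phi> z = c)"
    then obtain c where c: "cmod c = 1" "\<forall>z\<in>ball 0 1. \<phi> z = c" by blast
    have "\<Phi> = fps_const c"
      using eq_fps[OF p\<Phi> has_fps_expansion_const[of c]] c(2) by simp
    hence "cmod (fps_nth W 1) = 1 \<and> fps_nth W 2 = 0 \<and> fps_nth W 3 = 0"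
      using c W1 W2 W3 by simp
    thus ?thesis by blast
  next
    assume pl: "\<forall>z\<in>ball 0 1. cmod (\<phi> z) < 1"
    define a where "a = \<phi> 0"
    have a1: "cmod a < 1" using pl a_def by simp
    have \<Phi>0: "fps_nth \<Phi> 0 = a" using has_fps_expansion_imp_0_eq_fps_nth_0[OF p\<Phi>] a_def by simp
    define g where "g = (\<lambda>z. Moebius_function 0 a (\<phi> z))"
    have holg: "g holomorphic_on ball 0 1"
    proof -
      have "(Moebius_function 0 a \<circ> \<phi>) holomorphic_on ball 0 1"
        by (rule holomorphic_on_compose_gen[OF hol\<phi> Moebius_function_holomorphic[OF a1]]) (use pl in auto)
      thus ?thesis unfolding g_def o_def .
    qed
    have g0: "g 0 = 0" unfolding g_def a_def by (simp add: Moebius_function_eq_zero)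
    have gl: "\<forall>z\<in>ball 0 1. cmod (g z) < 1"
      unfolding g_def using pl a1 Moebius_function_norm_lt_1 by simp
    obtain h where holh: "h holomorphic_on ball 0 1" and gh: "\<forall>z\<in>ball 0 1. g z = z * h z"
      and h1: "\<forall>z\<in>ball 0 1. cmod (h z) \<le> 1"
      using schwarz_div[OF holg g0 gl] by blast
    define H where "H = fps_expansion h 0"
    have hH: "h has_fps_expansion H" unfolding H_def by (rule hol_fps[OF holh])
    define G where "G = fps_expansion g 0"
    have gG: "g has_fps_expansion G" unfolding G_def by (rule hol_fps[OF holg])
    have GH: "G = fps_X * H"
      using eq_fps[OF gG has_fps_expansion_mult[OF has_fps_expansion_fps_X hH]] gh by simp
    have SP: "cmod (fps_nth H 1) \<le> 1 - (cmod (fps_nth H 0))^2"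
      using schwarz_pick0[OF holh h1] has_fps_expansion_imp_0_eq_fps_nth_0[OF hH] unfolding H_def by simp
    have den: "1 - cnj a * \<phi> z \<noteq> 0" if "z \<in> ball 0 1" for z
    proof
      assume "1 - cnj a * \<phi> z = 0"
      hence "cmod (cnj a * \<phi> z) = 1" by (metis norm_one right_minus_eq)
      moreover have "cmod (cnj a * \<phi> z) < 1"
      proof -
        have "cmod a * cmod (\<phi> z) < 1 * 1"
          using a1 pl that by (intro mult_strict_mono') auto
        thus ?thesis by (simp add: norm_mult)
      qed
      ultimately show False by simp
    qed
    have "(\<lambda>z. g z * (1 - cnj a * \<phi> z)) has_fps_expansion G * (1 - fps_const (cnj a) * \<Phi>)"
      by (rule has_fps_expansion_mult[OF gG has_fps_expansion_diff[OF has_fps_expansion_1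
                has_fps_expansion_cmult_left[OF p\<Phi>]]])
    moreover have "(\<lambda>z. \<phi> z - a) has_fps_expansion \<Phi> - fps_const a"
      by (rule has_fps_expansion_diff[OF p\<Phi> has_fps_expansion_const])
    moreover have "\<forall>z\<in>ball 0 1. g z * (1 - cnj a * \<phi> z) = \<phi> z - a"
      using den unfolding g_def Moebius_function_def by simp
    ultimately have eqG: "G * (1 - fps_const (cnj a) * \<Phi>) = \<Phi> - fps_const a"
      by (rule eq_fps)
    define \<sigma> where "\<sigma> = 1 - (cmod a)^2"
    have \<sigma>0: "\<sigma> > 0" unfolding \<sigma>_def using a1 by (simp add: abs_square_less_1)
    have ca: "cnj a * a = of_real (1 - \<sigma>)" unfolding \<sigma>_def using cnj_mult_self[of a] by simp
    have G0: "fps_nth G 0 = 0" "fps_nth G 1 = fps_nth H 0" "fps_nth G 2 = fps_nth H 1"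
      unfolding GH by (simp_all add: fps_X_mult_nth)
    have "fps_nth (G * (1 - fps_const (cnj a) * \<Phi>)) 1 = fps_nth (\<Phi> - fps_const a) 1" by (simp only: eqG)
    hence e1: "fps_nth H 0 * (1 - cnj a * a) = fps_nth \<Phi> 1"
      by (simp add: fps_mult_nth_1 GH fps_X_mult_nth \<Phi>0)
    have "fps_nth (G * (1 - fps_const (cnj a) * \<Phi>)) 2 = fps_nth (\<Phi> - fps_const a) 2" by (simp only: eqG)
    hence e2: "fps_nth H 0 * (- cnj a * fps_nth \<Phi> 1) + fps_nth H 1 * (1 - cnj a * a) = fps_nth \<Phi> 2"
      by (simp add: fps_mult_nth_2 GH fps_X_mult_nth \<Phi>0)
    have e1': "fps_nth \<Phi> 1 = of_real \<sigma> * fps_nth H 0" using e1 ca by (simp add: mult.commute)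
    have e2': "of_real \<sigma> * fps_nth \<Phi> 2 + cnj a * (fps_nth \<Phi> 1)^2 = (of_real \<sigma>)^2 * fps_nth H 1"
    proof -
      have ca': "cnj a * a = 1 - of_real \<sigma>" using ca by simp
      show ?thesis using e1' e2 ca' by algebra
    qed
    have "cmod (of_real \<sigma> * fps_nth \<Phi> 2 + cnj a * (fps_nth \<Phi> 1)^2) = \<sigma>^2 * cmod (fps_nth H 1)"
      unfolding e2' using \<sigma>0 by (simp add: norm_mult norm_power)
    also have "\<dots> \<le> \<sigma>^2 * (1 - (cmod (fps_nth H 0))^2)"
      using SP by (intro mult_left_mono) auto
    also have "\<dots> = \<sigma>^2 - (cmod (fps_nth \<Phi> 1))^2"
      unfolding e1' using \<sigma>0 by (simp add: norm_mult power_mult_distrib algebra_simps)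
    finally have "cmod (of_real \<sigma> * fps_nth \<Phi> 2 + cnj a * (fps_nth \<Phi> 1)^2) \<le> \<sigma>^2 - (cmod (fps_nth \<Phi> 1))^2" .
    thus ?thesis using a1 unfolding W1 W2 W3 \<Phi>0 \<sigma>_def by blast
  qed
qed

lemma aux_calc:
  fixes z s pp :: complex
  assumes "1 - z \<noteq> 0" "1 + z \<noteq> 0"
  shows "(1 - z^2) * (s * (pp / ((1+z)/(1-z))) * (2 / (1-z)^2)) = 2 * s * pp"
proof -
  have iA: "(1-z) * inverse (1-z) = 1" and iB: "(1+z) * inverse (1+z) = 1" using assms by simp_all
  show ?thesis unfolding divide_inverse power2_eq_square inverse_mult_distrib inverse_inverse_eq
    using iA iB by algebra
qed

lemma Re_cayley_pos:
  fixes z :: complex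
  assumes "z \<in> ball 0 1"
  shows "Re ((1+z)/(1-z)) > 0"
proof -
  have n: "cmod z < 1" using assms by simp
  have "(Re z)^2 + (Im z)^2 < 1"
    using n by (metis cmod_power2 abs_square_less_1 abs_norm_cancel)
  hence num: "Re (1+z) * Re (1-z) + Im (1+z) * Im (1-z) > 0" by (simp add: power2_eq_square algebra_simps)
  have "z \<noteq> 1" using n by auto
  hence "1 - z \<noteq> 0" by simp
  hence "(Re (1-z))^2 + (Im (1-z))^2 > 0" by (metis complex_eq_iff sum_power2_gt_zero_iff zero_complex.sel(1) zero_complex.sel(2))
  thus ?thesis using num unfolding Re_divide by simp
qed

lemma cayley_notin:
  fixes z :: complex
  assumes "z \<in> ball 0 1"
  shows "(1+z)/(1-z) \<notin> \<real>\<^sub>\<le>\<^sub>0"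
  using Re_cayley_pos[OF assms] by (simp add: complex_nonpos_Reals_iff)

lemma Fb_props:
  fixes \<beta> :: real
  defines "Fb \<equiv> \<lambda>z::complex. ((1+z)/(1-z)) powr complex_of_real \<beta>"
  shows "Fb holomorphic_on ball 0 1" "Fb 0 = 1"
    "\<forall>z\<in>ball 0 1. (1 - z^2) * deriv Fb z = 2 * of_real \<beta> * Fb z"
proof -
  have nz: "1 - z \<noteq> 0" "1 + z \<noteq> 0" if "z \<in> ball 0 1" for z :: complex
  proof -
    have "cmod z < 1" using that by simp
    thus "1 - z \<noteq> 0" "1 + z \<noteq> 0" by (auto simp: add_eq_0_iff)
  qed
  show "Fb holomorphic_on ball 0 1"
    unfolding Fb_def using nz cayley_notin by (intro holomorphic_intros) auto
  show "Fb 0 = 1" unfolding Fb_def by simp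
  show "\<forall>z\<in>ball 0 1. (1 - z^2) * deriv Fb z = 2 * of_real \<beta> * Fb z"
  proof
    fix z :: complex assume z: "z \<in> ball 0 1"
    define u where "u = (\<lambda>z::complex. (1+z)/(1-z))"
    define s where "s = complex_of_real \<beta>"
    have du: "(u has_field_derivative (2 / (1-z)^2)) (at z)"
      unfolding u_def using nz[OF z]
      by (auto intro!: derivative_eq_intros simp: field_simps power2_eq_square)
    have dp: "((\<lambda>v. v powr s) has_field_derivative (s * (u z) powr (s - 1))) (at (u z))"
      by (rule has_field_derivative_powr) (use cayley_notin[OF z] in \<open>simp add: u_def\<close>)
    have "((\<lambda>z. u z powr s) has_field_derivative (s * (u z) powr (s - 1)) * (2 / (1-z)^2)) (at z)"
      by (rule DERIV_chain2[OF dp du])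
    hence "deriv Fb z = (s * (u z) powr (s - 1)) * (2 / (1-z)^2)"
      unfolding Fb_def u_def s_def by (rule DERIV_imp_deriv)
    also have "(u z) powr (s - 1) = (u z) powr s / u z"
      by (simp add: powr_diff)
    finally have "deriv Fb z = s * ((u z) powr s / u z) * (2 / (1-z)^2)" .
    moreover have "Fb z = (u z) powr s" unfolding Fb_def u_def s_def ..
    ultimately show "(1 - z^2) * deriv Fb z = 2 * of_real \<beta> * Fb z"
      unfolding s_def u_def using aux_calc[OF nz[OF z], of "complex_of_real \<beta>"] by simp
  qed
qed

lemma Fb_coeffs:
  fixes \<beta> :: real
  defines "Fb \<equiv> \<lambda>z::complex. ((1+z)/(1-z)) powr complex_of_real \<beta>"
  defines "Fs \<equiv> fps_expansion Fb 0"
  shows "fps_nth Fs 0 = 1" "fps_nth Fs 1 = 2 * of_real \<beta>" "fps_nth Fs 2 = 2 * (of_real \<beta>)^2"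
    "fps_nth Fs 3 = (2 * of_real \<beta> + 4 * (of_real \<beta>)^3) / 3"
proof -
  note P = Fb_props[of \<beta>, folded Fb_def]
  have fF: "Fb has_fps_expansion Fs" unfolding Fs_def by (rule hol_fps[OF P(1)])
  have "Fb 0 = 1" unfolding Fb_def by simp
  thus F0: "fps_nth Fs 0 = 1" using has_fps_expansion_imp_0_eq_fps_nth_0[OF fF] by simp
  have "(\<lambda>z. (1 - z^2) * deriv Fb z) has_fps_expansion (1 - fps_X^2) * fps_deriv Fs"
    by (rule has_fps_expansion_mult[OF has_fps_expansion_diff[OF has_fps_expansion_1
          has_fps_expansion_fps_X_power] has_fps_expansion_deriv[OF fF]])
  moreover have "(\<lambda>z. 2 * of_real \<beta> * Fb z) has_fps_expansion fps_const (2 * of_real \<beta>) * Fs"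
    by (rule has_fps_expansion_cmult_left[OF fF])
  ultimately have E: "(1 - fps_X^2) * fps_deriv Fs = fps_const (2 * of_real \<beta>) * Fs"
    using P(3) unfolding Fb_def by (rule eq_fps)
  have c: "fps_nth ((1 - fps_X^2) * fps_deriv Fs) n = fps_nth (fps_const (2 * of_real \<beta>) * Fs) n" for n
    by (simp only: E)
  have c0: "fps_nth Fs 1 = 2 * of_real \<beta> * fps_nth Fs 0"
    using c[of 0] by (simp add: fps_X_power_mult_nth fps_X_power_mult_right_nth algebra_simps)
  have c1: "2 * fps_nth Fs 2 = 2 * of_real \<beta> * fps_nth Fs 1"
    using c[of 1] by (simp add: fps_X_power_mult_nth fps_X_power_mult_right_nth algebra_simps eval_nat_numeral)
  have c2: "3 * fps_nth Fs 3 - fps_nth Fs 1 = 2 * of_real \<beta> * fps_nth Fs 2"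
    using c[of 2] by (simp add: fps_X_power_mult_nth fps_X_power_mult_right_nth algebra_simps eval_nat_numeral)
  show F1: "fps_nth Fs 1 = 2 * of_real \<beta>" using c0 F0 by simp
  show F2: "fps_nth Fs 2 = 2 * (of_real \<beta>)^2" using c1 F1 by (simp add: power2_eq_square)
  show "fps_nth Fs 3 = (2 * of_real \<beta> + 4 * (of_real \<beta>)^3) / 3"
    using c2 F1 F2 by (simp add: field_simps power2_eq_square power3_eq_cube)
qed

lemma compose_coeffs:
  fixes F W :: "'a::comm_ring_1 fps"
  assumes W0: "fps_nth W 0 = 0"
  shows "fps_nth (fps_compose F W) 1 = fps_nth F 1 * fps_nth W 1"
    "fps_nth (fps_compose F W) 2 = fps_nth F 1 * fps_nth W 2 + fps_nth F 2 * (fps_nth W 1)^2"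
    "fps_nth (fps_compose F W) 3 = fps_nth F 1 * fps_nth W 3 + 2 * fps_nth F 2 * fps_nth W 1 * fps_nth W 2
        + fps_nth F 3 * (fps_nth W 1)^3"
  using W0 by (simp_all add: fps_compose_nth eval_nat_numeral fps_mult_nth algebra_simps)

lemma coef_algebra:
  fixes b w1 w2 w3 F3 A1 A2 A3 A4 C1 C2 C3 :: complex
  assumes "A1 = 1" "C1 = 2*b*w1" "C2 = 2*b*w2 + 2*b^2*w1^2"
    "C3 = 2*b*w3 + 2 * (2*b^2) * w1 * w2 + F3 * w1^3" "3 * F3 = 2*b + 4*b^3"
    "A1 * C1 = 2 * A2" "A1 * C2 + 2 * A2 * C1 = 6 * A3" "A1 * C3 + 2 * A2 * C2 + 3 * A3 * C1 = 12 * A4"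
  shows "3 * A3 = b * w2 + 3 * b^2 * w1^2"
    "18 * A4 = 3 * b * (w3 + 5 * b * w1 * w2 + ((1 + 17 * b^2)/3) * w1^3)"
proof -
  show "3 * A3 = b * w2 + 3 * b^2 * w1^2" using assms by algebra
  have "18 * A4 = 3 * b * w3 + 15 * b^2 * w1 * w2 + b * (1 + 17 * b^2) * w1^3" using assms by algebra
  moreover have "3 * b * (w3 + 5 * b * w1 * w2 + ((1 + 17 * b^2)/3) * w1^3) = 3 * b * w3 + 15 * b^2 * w1 * w2 + b * (1 + 17 * b^2) * w1^3"
    by (simp add: distrib_left mult.assoc mult.left_commute) (simp add: algebra_simps power2_eq_square)
  ultimately show "18 * A4 = 3 * b * (w3 + 5 * b * w1 * w2 + ((1 + 17 * b^2)/3) * w1^3)"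
    by simp
qed

theorem corollary3:
  fixes f :: "complex \<Rightarrow> complex" and \<beta> :: real
  assumes "2/3 \<le> \<beta>" and "\<beta> \<le> 1"
    and "f holomorphic_on ball 0 1"
    and "f 0 = 0" and "deriv f 0 = 1"
    and "\<forall>z\<in>ball 0 1. deriv f z \<noteq> 0"
    and "subordinate (\<lambda>z. 1 + z * deriv (deriv f) z / deriv f z)
                     (\<lambda>z. ((1 + z) / (1 - z)) powr (complex_of_real \<beta>))"
  shows "cmod ((taylor_coeff f 3)\<^sup>2 - (taylor_coeff f 4)\<^sup>2)
           \<le> \<beta>^4 + \<beta>\<^sup>2 * (1 + 17 * \<beta>\<^sup>2)\<^sup>2 / 324"
proof -
  note b1 = assms(1) and b2 = assms(2) and holf = assms(3) and f0 = assms(4) and df0 = assms(5)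
    and dfnz = assms(6)
  define Fb where "Fb = (\<lambda>z::complex. ((1 + z) / (1 - z)) powr (complex_of_real \<beta>))"
  obtain w where holw: "w holomorphic_on ball 0 1" and wimg: "w ` ball 0 1 \<subseteq> ball 0 1"
    and w0: "w 0 = 0" and sub: "\<forall>z\<in>ball 0 1. 1 + z * deriv (deriv f) z / deriv f z = Fb (w z)"
    using assms(7) unfolding subordinate_def Fb_def by blast
  have wl: "\<forall>z\<in>ball 0 1. cmod (w z) < 1" using wimg by auto
  define A where "A = fps_expansion f 0"
  have fA: "f has_fps_expansion A" unfolding A_def by (rule hol_fps[OF holf])
  have tc: "taylor_coeff f n = fps_nth A n" for n
    unfolding taylor_coeff_def using fps_nth_fps_expansion[OF fA, of n] by simp
  have A1: "fps_nth A 1 = 1" using fps_nth_fps_expansion[OF fA, of 1] df0 by simp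
  define W where "W = fps_expansion w 0"
  have wW: "w has_fps_expansion W" unfolding W_def by (rule hol_fps[OF holw])
  have W0: "fps_nth W 0 = 0" using has_fps_expansion_imp_0_eq_fps_nth_0[OF wW] w0 by simp
  define Fs where "Fs = fps_expansion Fb 0"
  note FP = Fb_props[of \<beta>, folded Fb_def]
  note FC = Fb_coeffs[of \<beta>, folded Fb_def, folded Fs_def]
  have fF: "Fb has_fps_expansion Fs" unfolding Fs_def by (rule hol_fps[OF FP(1)])
  have comp: "(Fb \<circ> w) has_fps_expansion fps_compose Fs W"
    by (rule has_fps_expansion_compose[OF fF wW W0])
  have L: "(\<lambda>z. deriv f z * ((Fb \<circ> w) z - 1)) has_fps_expansion fps_deriv A * (fps_compose Fs W - 1)"
    by (rule has_fps_expansion_mult[OF has_fps_expansion_deriv[OF fA]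
          has_fps_expansion_diff[OF comp has_fps_expansion_1]])
  have R: "(\<lambda>z. z * deriv (deriv f) z) has_fps_expansion fps_X * fps_deriv (fps_deriv A)"
    by (rule has_fps_expansion_mult[OF has_fps_expansion_fps_X
          has_fps_expansion_deriv[OF has_fps_expansion_deriv[OF fA]]])
  have LR: "\<forall>z\<in>ball 0 1. deriv f z * ((Fb \<circ> w) z - 1) = z * deriv (deriv f) z"
  proof
    fix z :: complex assume z: "z \<in> ball 0 1"
    have h: "1 + z * deriv (deriv f) z / deriv f z = Fb (w z)" using sub z by blast
    have "Fb (w z) - 1 = z * deriv (deriv f) z / deriv f z" unfolding h[symmetric] by simp
    thus "deriv f z * ((Fb \<circ> w) z - 1) = z * deriv (deriv f) z" using dfnz z by simp
  qed
  have E: "fps_deriv A * (fps_compose Fs W - 1) = fps_X * fps_deriv (fps_deriv A)"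
    by (rule eq_fps[OF L R LR])
  define C where "C = fps_compose Fs W - 1"
  have C0: "fps_nth C 0 = 0" unfolding C_def using FC(1) by simp
  have C1: "fps_nth C 1 = fps_nth Fs 1 * fps_nth W 1" unfolding C_def using compose_coeffs(1)[OF W0] by simp
  have C2: "fps_nth C 2 = fps_nth Fs 1 * fps_nth W 2 + fps_nth Fs 2 * (fps_nth W 1)^2"
    unfolding C_def using compose_coeffs(2)[OF W0] by simp
  have C3: "fps_nth C 3 = fps_nth Fs 1 * fps_nth W 3 + 2 * fps_nth Fs 2 * fps_nth W 1 * fps_nth W 2
        + fps_nth Fs 3 * (fps_nth W 1)^3"
    unfolding C_def using compose_coeffs(3)[OF W0] by simp
  have e: "fps_nth (fps_deriv A * C) n = fps_nth (fps_X * fps_deriv (fps_deriv A)) n" for n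
    using E unfolding C_def by simp
  have e1: "fps_nth A 1 * fps_nth C 1 = 2 * fps_nth A 2"
    using e[of 1] C0 unfolding fps_mult_nth_1 by (simp add: fps_X_mult_nth fps_deriv_nth eval_nat_numeral algebra_simps)
  have e2: "fps_nth A 1 * fps_nth C 2 + 2 * fps_nth A 2 * fps_nth C 1 = 6 * fps_nth A 3"
    using e[of 2] C0 unfolding fps_mult_nth_2 by (simp add: fps_X_mult_nth fps_deriv_nth eval_nat_numeral algebra_simps)
  have e3: "fps_nth A 1 * fps_nth C 3 + 2 * fps_nth A 2 * fps_nth C 2 + 3 * fps_nth A 3 * fps_nth C 1
      = 12 * fps_nth A 4"
    using e[of 3] C0 unfolding fps_mult_nth_3 by (simp add: fps_X_mult_nth fps_deriv_nth eval_nat_numeral algebra_simps)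
  define b where "b = complex_of_real \<beta>"
  define w1 where "w1 = fps_nth W 1"
  define w2 where "w2 = fps_nth W 2"
  define w3 where "w3 = fps_nth W 3"
  have F3: "3 * fps_nth Fs 3 = 2*b + 4*b^3" unfolding b_def using FC(4) by (simp add: mult.commute)
  note CA = coef_algebra[OF A1 C1[unfolded FC(2), folded b_def w1_def]
     C2[unfolded FC(2) FC(3), folded b_def w1_def w2_def]
     C3[unfolded FC(2) FC(3), folded b_def w1_def w2_def w3_def] F3 e1 e2 e3]
  define \<nu> where "\<nu> = (1 + 17 * \<beta>^2) / 3"
  have a3: "taylor_coeff f 3 = (b * w2 + 3 * b^2 * w1^2) / 3"
  proof -
    have "taylor_coeff f 3 = (3 * fps_nth A 3) / 3" using tc[of 3] by simp
    thus ?thesis unfolding CA(1) .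
  qed
  have a4: "taylor_coeff f 4 = b / 6 * (w3 + of_real (5*\<beta>) * w1 * w2 + of_real \<nu> * w1^3)"
  proof -
    have "taylor_coeff f 4 = (18 * fps_nth A 4) / 18" using tc[of 4] by simp
    also have "\<dots> = 3 * b * (w3 + 5 * b * w1 * w2 + ((1 + 17 * b^2)/3) * w1^3) / 18" unfolding CA(2) ..
    also have "\<dots> = b / 6 * (w3 + of_real (5*\<beta>) * w1 * w2 + of_real \<nu> * w1^3)"
      unfolding b_def \<nu>_def by simp
    finally show ?thesis .
  qed
  have bsq: "\<beta> \<le> 3 * \<beta>^2" using b1 by (simp add: power2_eq_square)
  have bnn: "\<beta> \<ge> 0" using b1 by simp
  have nu0: "\<nu> \<ge> 0" unfolding \<nu>_def by simp
  have nb: "cmod b = \<beta>" unfolding b_def using bnn by simp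
  have a4n: "cmod (taylor_coeff f 4) = \<beta> / 6 * cmod (w3 + of_real (5*\<beta>) * w1 * w2 + of_real \<nu> * w1^3)"
    unfolding a4 by (simp add: norm_mult nb)
  have a3n: "cmod (taylor_coeff f 3) \<le> (\<beta> * cmod w2 + 3 * \<beta>^2 * (cmod w1)^2) / 3"
  proof -
    have "cmod (b * w2 + 3 * b^2 * w1^2) \<le> cmod (b * w2) + cmod (3 * b^2 * w1^2)" by (rule norm_triangle_ineq)
    also have "\<dots> = \<beta> * cmod w2 + 3 * \<beta>^2 * (cmod w1)^2" by (simp add: norm_mult norm_power nb)
    finally show ?thesis unfolding a3 by (simp add: norm_divide)
  qed
  from schur3[OF holw w0 wl, folded W_def, folded w1_def w2_def w3_def]
  have bounds: "cmod (taylor_coeff f 3) \<le> \<beta>^2 \<and> cmod (taylor_coeff f 4) \<le> \<beta> * \<nu> / 6"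
  proof
    assume c: "cmod w1 = 1 \<and> w2 = 0 \<and> w3 = 0"
    have "cmod (taylor_coeff f 3) \<le> \<beta>^2" using a3n c by simp
    moreover have "cmod (taylor_coeff f 4) = \<beta> * \<nu> / 6" unfolding a4n using c nu0 by (simp add: norm_mult norm_power)
    ultimately show ?thesis by simp
  next
    assume c: "cmod w1 < 1 \<and> cmod (of_real (1 - (cmod w1)^2) * w3 + cnj w1 * w2^2)
            \<le> (1 - (cmod w1)^2)^2 - (cmod w2)^2"
    have k: "cmod (w3 + of_real (5*\<beta>) * w1 * w2 + of_real \<nu> * w1^3) \<le> \<nu>"
      using key_ineq[OF b1 b2 conjunct1[OF c] conjunct2[OF c]] unfolding \<nu>_def .
    have "cmod (taylor_coeff f 4) \<le> \<beta> / 6 * \<nu>" unfolding a4n using k bnn by (intro mult_left_mono) auto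
    moreover have "cmod (taylor_coeff f 3) \<le> \<beta>^2"
    proof -
      have x1: "(cmod w1)^2 \<le> 1" using c by (simp add: abs_square_le_1 less_imp_le)
      have "(cmod w2)^2 \<le> (1 - (cmod w1)^2)^2" using c norm_ge_zero[of "of_real (1 - (cmod w1)^2) * w3 + cnj w1 * w2^2"] by linarith
      hence w2b: "cmod w2 \<le> 1 - (cmod w1)^2" by (rule power2_le_imp_le) (use x1 in simp)
      have "\<beta> * cmod w2 \<le> 3 * \<beta>^2 * (1 - (cmod w1)^2)"
      proof -
        have "\<beta> * cmod w2 \<le> \<beta> * (1 - (cmod w1)^2)" using w2b bnn by (rule mult_left_mono)
        also have "\<dots> \<le> 3 * \<beta>^2 * (1 - (cmod w1)^2)" using bsq x1 by (intro mult_right_mono) auto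
        finally show ?thesis .
      qed
      hence "(\<beta> * cmod w2 + 3 * \<beta>^2 * (cmod w1)^2) / 3 \<le> \<beta>^2" by (simp add: algebra_simps)
      thus ?thesis using a3n by linarith
    qed
    ultimately show ?thesis by simp
  qed
  have "cmod ((taylor_coeff f 3)\<^sup>2 - (taylor_coeff f 4)\<^sup>2)
      \<le> (cmod (taylor_coeff f 3))^2 + (cmod (taylor_coeff f 4))^2"
    using norm_triangle_ineq4[of "(taylor_coeff f 3)\<^sup>2" "(taylor_coeff f 4)\<^sup>2"] by (simp add: norm_power)
  also have "\<dots> \<le> (\<beta>^2)^2 + (\<beta> * \<nu> / 6)^2"
    using bounds by (intro add_mono power_mono) auto
  also have "\<dots> = \<beta>^4 + \<beta>\<^sup>2 * (1 + 17 * \<beta>\<^sup>2)\<^sup>2 / 324"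
    unfolding \<nu>_def by (simp add: power2_eq_square power4_eq_xxxx field_simps)
  finally show ?thesis .
qed

end
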